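(* For every permutation $\pi$ in the domain of $\psi_p$ (respectively $\psi_q$, $\psi_s$), the permutation $\psi_p(\pi)$ (respectively $\psi_q(\pi)$, $\psi_s(\pi)$) has the same number of recoils as $\pi$. For every $\pi$ in the domain of $\psi_r$, $\psi_r(\pi)$ has exactly one more recoil than $\pi$.
   Context: Permutations are in one-line form; $e_n$ is the identity of $S_n$, $e_0$ the empty permutation. Evil-avoiding: avoids $2413,4132,4213,3214$. A recoil of $\pi\in S_n$ is $i\in\{1,\dots,n-1\}$ with $\pi^{-1}_i>\pi^{-1}_{i+1}$. $\rho_{i,j}(\pi)\in S_{n+1}$ ($\pi\in S_n$, $1\le i,j\le n+1$) increases every entry $\ge i$ by $1$ and inserts $i$ at position $j$; $\gamma_{a,b}(\pi)$ ($a>b$) moves the entry at position $a$ to position $b$. $\pi\in S_n$ is $(a,b)$-sandwiched ($a\ge0,b\ge1$) if $(\pi_1,\dots,\pi_a)=(1,\dots,a)$ and $(\pi_{n-b+1},\dots,\pi_n)=(a+1,\dots,a+b)$. Operators: $\psi_p=\rho_{1,1}$ on non-identity evil-avoiding permutations; $\psi_q$ on non-identity evil-avoiding $\pi\in S_n$ with smallest recoil $t$: $\psi_q(\pi)=\gamma_{n-b+2,a+2}(\rho_{t+1,1}(\pi))$ if $\pi$ is $(a,b)$-sandwiched, else $\rho_{t+1,1}(\pi)$; $\psi_r(\pi)=\rho_{1,n+1}(\pi)$ on evil-avoiding $\pi\in S_n$, $n\ge1$; $\psi_s(\pi)=\rho_{\pi_n+1,n+1}(\pi)$ (and $\psi_s(e_0)=[1]$)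 on evil-avoiding $\pi\in S_n$ that are either $e_n$ ($n\ge0$) or satisfy $(\pi_{n-t+1},\dots,\pi_n)=(1,\dots,t)$ for some $t\ge1$. *)

theory Defs
  imports Main "HOL-Library.Sublist"
begin

definition is_perm :: "nat list \<Rightarrow> bool" where
  "is_perm p \<longleftrightarrow> distinct p \<and> set p = {1..length p}"

definition idperm :: "nat \<Rightarrow> nat list" where
  "idperm n = [1..<n+1]"

definition contains_pattern :: "nat list \<Rightarrow> nat list \<Rightarrow> bool" where
  "contains_pattern p sigma \<longleftrightarrow>
     (\<exists>q. subseq q p \<and> length q = length sigma \<and>
        (\<forall>a < length sigma. \<forall>b < length sigma. q ! a < q ! b \<longleftrightarrow> sigma ! a < sigma ! b))"

definition evil_avoiding :: "nat list \<Rightarrow> bool" where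
  "evil_avoiding p \<longleftrightarrow> is_perm p \<and>
     \<not> contains_pattern p [2,4,1,3] \<and> \<not> contains_pattern p [4,1,3,2] \<and>
     \<not> contains_pattern p [4,2,1,3] \<and> \<not> contains_pattern p [3,2,1,4]"

text \<open>Inverse permutation (1-indexed): position of value v.\<close>
definition perm_inv :: "nat list \<Rightarrow> nat \<Rightarrow> nat" where
  "perm_inv p v = Suc (THE j. j < length p \<and> p ! j = v)"

definition recoils :: "nat list \<Rightarrow> nat set" where
  "recoils p = {i. 1 \<le> i \<and> i \<le> length p - 1 \<and> perm_inv p i > perm_inv p (Suc i)}"

definition num_recoils :: "nat list \<Rightarrow> nat" where
  "num_recoils p = card (recoils p)"

text \<open>rho i j: increase entries >= i by one, insert i at (1-indexed) position j.\<close>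
definition rho :: "nat \<Rightarrow> nat \<Rightarrow> nat list \<Rightarrow> nat list" where
  "rho i j p = (let q = map (\<lambda>x. if x \<ge> i then x + 1 else x) p
                in take (j - 1) q @ [i] @ drop (j - 1) q)"

text \<open>gamma a b (a > b): move the entry at (1-indexed) position a to position b.\<close>
definition gamma :: "nat \<Rightarrow> nat \<Rightarrow> nat list \<Rightarrow> nat list" where
  "gamma a b p = take (b - 1) p @ [p ! (a - 1)] @ drop (b - 1) (take (a - 1) p) @ drop a p"

definition sandwiched :: "nat \<Rightarrow> nat \<Rightarrow> nat list \<Rightarrow> bool" where
  "sandwiched a b p \<longleftrightarrow> 1 \<le> b \<and> a \<le> length p \<and> b \<le> length p \<and>
     take a p = [1..<a+1] \<and> drop (length p - b) p = [a+1..<a+b+1]"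

definition psi_p :: "nat list \<Rightarrow> nat list" where
  "psi_p p = rho 1 1 p"

definition psi_q :: "nat list \<Rightarrow> nat list" where
  "psi_q p = (let n = length p; t = Min (recoils p) in
     if (\<exists>a b. sandwiched a b p)
     then (let (a, b) = (SOME ab. sandwiched (fst ab) (snd ab) p)
           in gamma (n - b + 2) (a + 2) (rho (t + 1) 1 p))
     else rho (t + 1) 1 p)"

definition psi_r :: "nat list \<Rightarrow> nat list" where
  "psi_r p = rho 1 (length p + 1) p"

definition psi_s :: "nat list \<Rightarrow> nat list" where
  "psi_s p = (if p = [] then [1] else rho (last p + 1) (length p + 1) p)"

end

theory Submission
  imports Defs
begin

fun before :: "nat list \<Rightarrow> nat \<Rightarrow> nat \<Rightarrow> bool" where
  "before [] x y = False"
| "before (a # xs) x y = ((a = x \<and> y \<in> set xs) \<or> before xs x y)"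

lemma before_set: "before xs x y \<Longrightarrow> x \<in> set xs \<and> y \<in> set xs"
  by (induction xs) auto

lemma before_append[simp]:
  "before (xs @ ys) x y \<longleftrightarrow> before xs x y \<or> before ys x y \<or> (x \<in> set xs \<and> y \<in> set ys)"
  by (induction xs) auto

lemma before_map:
  assumes "inj f" shows "before (map f xs) (f x) (f y) \<longleftrightarrow> before xs x y"
  using assms by (induction xs) (auto simp: inj_eq image_iff)

lemma before_upt[simp]: "before [a..<b] x y \<longleftrightarrow> a \<le> x \<and> x < y \<and> y < b"
proof (induction b)
  case 0 then show ?case by simp
next
  case (Suc b) then show ?case by (cases "a \<le> b") auto
qed

lemma before_nth:
  "before xs x y \<longleftrightarrow> (\<exists>i j. i < j \<and> j < length xs \<and> xs!i = x \<and> xs!j = y)"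
proof (induction xs)
  case Nil then show ?case by simp
next
  case (Cons a xs)
  show ?case
  proof
    assume "before (a # xs) x y"
    then consider "a = x" "y \<in> set xs" | "before xs x y" by auto
    then show "\<exists>i j. i < j \<and> j < length (a#xs) \<and> (a#xs)!i = x \<and> (a#xs)!j = y"
    proof cases
      case 1
      then obtain j where "j < length xs" "xs!j = y" by (auto simp: in_set_conv_nth)
      then show ?thesis using 1 by (intro exI[of _ 0] exI[of _ "Suc j"]) auto
    next
      case 2
      then obtain i j where "i < j" "j < length xs" "xs!i = x" "xs!j = y" using Cons by auto
      then show ?thesis by (intro exI[of _ "Suc i"] exI[of _ "Suc j"]) auto
    qed
  next
    assume "\<exists>i j. i < j \<and> j < length (a#xs) \<and> (a#xs)!i = x \<and> (a#xs)!j = y"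
    then obtain i j where ij: "i < j" "j < length (a#xs)" "(a#xs)!i = x" "(a#xs)!j = y" by blast
    then obtain j' where j': "j = Suc j'" by (cases j) auto
    show "before (a # xs) x y"
    proof (cases i)
      case 0 then show ?thesis using ij j' by (auto simp: in_set_conv_nth)
    next
      case (Suc i')
      then have "before xs x y" using Cons ij j' by auto
      then show ?thesis by simp
    qed
  qed
qed

lemma perm_inv_nth:
  assumes "distinct xs" "j < length xs" shows "perm_inv xs (xs!j) = Suc j"
proof -
  have "(THE k. k < length xs \<and> xs ! k = xs ! j) = j"
    using assms by (intro the_equality) (auto simp: nth_eq_iff_index_eq)
  then show ?thesis by (simp add: perm_inv_def)
qed

lemma perm_inv_less:
  assumes "distinct xs" "x \<in> set xs" "y \<in> set xs"
  shows "perm_inv xs y < perm_inv xs x \<longleftrightarrow> before xs y x"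
proof -
  obtain jx where jx: "jx < length xs" "xs!jx = x" using assms by (auto simp: in_set_conv_nth)
  obtain jy where jy: "jy < length xs" "xs!jy = y" using assms by (auto simp: in_set_conv_nth)
  have "perm_inv xs y < perm_inv xs x \<longleftrightarrow> jy < jx"
    using perm_inv_nth[OF assms(1) jx(1)] perm_inv_nth[OF assms(1) jy(1)] jx jy by simp
  also have "\<dots> \<longleftrightarrow> before xs y x"
    unfolding before_nth using assms(1) jx jy by (auto simp: nth_eq_iff_index_eq)
  finally show ?thesis .
qed

definition recs :: "nat list \<Rightarrow> nat set" where
  "recs p = {i. 1 \<le> i \<and> i < length p \<and> before p (Suc i) i}"

lemma recoils_recs:
  assumes "distinct p" "set p = {1..length p}" shows "recoils p = recs p"
proof -
  have "i \<in> recoils p \<longleftrightarrow> i \<in> recs p" for i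
  proof (cases "1 \<le> i \<and> i < length p")
    case True
    then have "i \<in> set p" "Suc i \<in> set p" using assms by auto
    then show ?thesis using perm_inv_less[OF assms(1)] True by (auto simp: recoils_def recs_def)
  next
    case False then show ?thesis by (auto simp: recoils_def recs_def)
  qed
  then show ?thesis by blast
qed

lemma recs_finite: "finite (recs p)"
  unfolding recs_def by (rule finite_subset[of _ "{..<length p}"]) auto

lemma card_image_char:
  assumes "inj g" "\<And>j. g j \<in> B \<longleftrightarrow> j \<in> A" "\<And>i. i \<in> B \<Longrightarrow> i \<in> range g"
  shows "card B = card A"
proof -
  have "B = g ` A" using assms(2,3) by blast
  then show ?thesis using assms(1) by (simp add: card_image inj_on_subset)
qed


lemma evil_perm: "evil_avoiding p \<Longrightarrow> distinct p \<and> set p = {1..length p}"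
  by (simp add: evil_avoiding_def is_perm_def)

lemma rho_1_1: "0 \<notin> set p \<Longrightarrow> rho 1 1 p = 1 # map Suc p"
proof -
  assume "0 \<notin> set p"
  then have "map (\<lambda>x. if x \<ge> 1 then x + 1 else x) p = map Suc p"
    by (intro map_cong refl) (metis Suc_eq_plus1 leI less_one)
  then show ?thesis by (simp add: rho_def)
qed

lemma part_p:
  assumes "distinct p" "set p = {1..length p}"
  shows "num_recoils (psi_p p) = num_recoils p"
proof -
  have z: "0 \<notin> set p" using assms by auto
  let ?q = "1 # map Suc p"
  have q: "psi_p p = ?q" using rho_1_1[OF z] by (simp add: psi_p_def)
  have dq: "distinct ?q" "set ?q = {1..length ?q}" using assms z
    by (auto simp: distinct_map)
  have "card (recs ?q) = card (recs p)"
  proof (rule card_image_char[of Suc])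
    fix j
    show "Suc j \<in> recs ?q \<longleftrightarrow> j \<in> recs p"
    proof (cases j)
      case 0 then show ?thesis using z by (auto simp: recs_def dest: before_set)
    next
      case (Suc k) then show ?thesis by (auto simp: recs_def before_map[of Suc, simplified inj_Suc, simplified])
    qed
  next
    fix i assume "i \<in> recs ?q" then show "i \<in> range Suc" by (auto simp: recs_def) (metis Suc_le_D rangeI)
  qed simp
  then show ?thesis using recoils_recs[OF dq] recoils_recs[OF assms] q by (simp add: num_recoils_def)
qed

lemma part_r:
  assumes "distinct p" "set p = {1..length p}" "length p \<ge> 1"
  shows "num_recoils (psi_r p) = num_recoils p + 1"
proof -
  have z: "0 \<notin> set p" using assms by auto
  let ?q = "map Suc p @ [1]"
  have "map (\<lambda>x. if x \<ge> 1 then x + 1 else x) p = map Suc p"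
    using z by (intro map_cong refl) (metis Suc_eq_plus1 leI less_one)
  then have q: "psi_r p = ?q" by (simp add: psi_r_def rho_def)
  have dq: "distinct ?q" "set ?q = {1..length ?q}" using assms z
    by (auto simp: distinct_map)
  have 2: "2 \<in> set (map Suc p)" using assms by auto
  have "recs ?q = insert 1 (Suc ` recs p)"
  proof (rule set_eqI)
    fix i
    show "i \<in> recs ?q \<longleftrightarrow> i \<in> insert 1 (Suc ` recs p)"
    proof (cases i)
      case 0 then show ?thesis by (auto simp: recs_def)
    next
      case (Suc k)
      show ?thesis
      proof (cases k)
        case 0 then show ?thesis using Suc 2 assms by (auto simp: recs_def numeral_2_eq_2)
      next
        case (Suc k') then show ?thesis using \<open>i = Suc k\<close> z
          by (auto simp: recs_def before_map[of Suc, simplified inj_Suc, simplified])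
      qed
    qed
  qed
  moreover have "1 \<notin> Suc ` recs p" by (auto simp: recs_def)
  ultimately have "card (recs ?q) = card (recs p) + 1"
    using recs_finite by (simp add: card_image)
  then show ?thesis using recoils_recs[OF dq] recoils_recs[OF assms(1,2)] q by (simp add: num_recoils_def)
qed


lemma inj_shift: "inj (\<lambda>x::nat. if x \<ge> c then x + 1 else x)"
  by (auto simp: inj_on_def split: if_splits)

lemma inj_g: "inj (\<lambda>x::nat. if x < c then x else Suc x)"
  by (auto simp: inj_on_def split: if_splits)

lemma part_s:
  assumes "distinct p" "set p = {1..length p}" "p \<noteq> []"
  shows "num_recoils (psi_s p) = num_recoils p"
proof -
  define n where "n = length p"
  define l where "l = last p"
  define f where "f = (\<lambda>x::nat. if x \<ge> l + 1 then x + 1 else x)"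
  let ?Q = "map f p @ [l+1]"
  have Q: "psi_s p = ?Q" using assms(3) by (simp add: psi_s_def rho_def f_def l_def)
  have lset: "l \<in> set p" using assms(3) by (simp add: l_def)
  then have l1: "1 \<le> l" "l \<le> n" using assms(2) by (auto simp: n_def)
  have pdec: "p = butlast p @ [l]" using assms(3) by (simp add: l_def)
  have setp: "set p = set (butlast p) \<union> {l}" by (subst (1) pdec) simp
  have lnot: "l \<notin> set (butlast p)" using assms(1) pdec by (metis distinct_append distinct_butlast not_distinct_conv_prefix)
  have injf: "inj f" unfolding f_def by (rule inj_shift)
  have setQ: "set (map f p) = f ` {1..n}" using assms(2) by (simp add: n_def)
  have mnot: "l+1 \<notin> set (map f p)" using setQ by (auto simp: f_def split: if_splits)
  have dQ: "distinct ?Q" "set ?Q = {1..length ?Q}"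
  proof -
    show "distinct ?Q" using assms(1) injf mnot by (simp add: distinct_map inj_on_subset[OF injf])
    have "f ` {1..n} = {1..l} \<union> {l+2..n+1}"
    proof
      show "f ` {1..n} \<subseteq> {1..l} \<union> {l+2..n+1}" by (auto simp: f_def)
      show "{1..l} \<union> {l+2..n+1} \<subseteq> f ` {1..n}"
      proof
        fix x assume x: "x \<in> {1..l} \<union> {l+2..n+1}"
        show "x \<in> f ` {1..n}"
        proof (cases "x \<le> l")
          case True then show ?thesis using x l1 by (intro image_eqI[of _ _ x]) (auto simp: f_def)
        next
          case False then show ?thesis using x l1 by (intro image_eqI[of _ _ "x - 1"]) (auto simp: f_def)
        qed
      qed
    qed
    then show "set ?Q = {1..length ?Q}" using setQ l1 by (auto simp: n_def)
  qed
  let ?g = "\<lambda>x::nat. if x < l then x else Suc x"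
  have bm: "before (map f p) (f x) (f y) \<longleftrightarrow> before p x y" for x y using before_map[OF injf] .
  have "card (recs ?Q) = card (recs p)"
  proof (rule card_image_char[of ?g])
    fix j
    show "?g j \<in> recs ?Q \<longleftrightarrow> j \<in> recs p"
    proof (cases "j < l")
      case True
      then have "f j = j" "f (Suc j) = Suc j" by (auto simp: f_def)
      then have "before (map f p) (Suc j) j \<longleftrightarrow> before p (Suc j) j" using bm by metis
      then show ?thesis using True l1 by (auto simp: recs_def n_def)
    next
      case False
      show ?thesis
      proof (cases "j = l")
        case True
        have a: "before p (Suc l) l \<longleftrightarrow> Suc l \<in> set p"
          using lnot setp by (subst (1) pdec) (auto dest: before_set)
        have "f (Suc l) = Suc (Suc l)" by (simp add: f_def)
        then have c: "Suc (Suc l) \<in> f ` set p \<longleftrightarrow> Suc l \<in> set p"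
          by (metis inj_image_mem_iff injf)
        have "before ?Q (Suc (Suc l)) (Suc l) \<longleftrightarrow> Suc (Suc l) \<in> set (map f p)"
          using mnot by (auto dest: before_set)
        then have b: "before ?Q (Suc (Suc l)) (Suc l) \<longleftrightarrow> Suc l \<in> set p" using c by simp
        show ?thesis using True a b assms(2) l1 by (auto simp: recs_def)
      next
        case False
        then have jl: "j > l" using \<open>\<not> j < l\<close> by simp
        then have "f j = Suc j" "f (Suc j) = Suc (Suc j)" by (auto simp: f_def)
        then have "before (map f p) (Suc (Suc j)) (Suc j) \<longleftrightarrow> before p (Suc j) j" using bm by metis
        then show ?thesis using jl l1 by (auto simp: recs_def n_def)
      qed
    qed
  next
    fix i assume i: "i \<in> recs ?Q"
    have "i \<noteq> l"
    proof
      assume "i = l"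
      then have "before ?Q (Suc l) l" using i by (simp add: recs_def)
      then show False using mnot by (auto dest: before_set)
    qed
    then show "i \<in> range ?g"
    proof (cases "i < l")
      case True then show ?thesis by (intro range_eqI[where x=i]) simp
    next
      case False then show ?thesis using \<open>i \<noteq> l\<close> by (intro range_eqI[where x="i - 1"]) auto
    qed
  qed (rule inj_g)
  then show ?thesis using recoils_recs[OF dQ] recoils_recs[OF assms(1,2)] Q by (simp add: num_recoils_def)
qed


lemma part_q1:
  assumes "distinct p" "set p = {1..length p}" "t \<in> recs p"
  shows "num_recoils (rho (t+1) 1 p) = num_recoils p"
proof -
  define n where "n = length p"
  define f where "f = (\<lambda>x::nat. if x \<ge> t + 1 then x + 1 else x)"
  let ?Q = "(t+1) # map f p"
  have Q: "rho (t+1) 1 p = ?Q" by (simp add: rho_def f_def)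
  have t1: "1 \<le> t" "t < n" "t \<in> set p" using assms(2,3) by (auto simp: recs_def n_def)
  have injf: "inj f" unfolding f_def by (rule inj_shift)
  have setQ: "set (map f p) = f ` {1..n}" using assms(2) by (simp add: n_def)
  have mnot: "t+1 \<notin> set (map f p)" using setQ by (auto simp: f_def split: if_splits)
  have dQ: "distinct ?Q" "set ?Q = {1..length ?Q}"
  proof -
    show "distinct ?Q" using assms(1) injf mnot by (simp add: distinct_map inj_on_subset[OF injf])
    have "f ` {1..n} = {1..t} \<union> {t+2..n+1}"
    proof
      show "f ` {1..n} \<subseteq> {1..t} \<union> {t+2..n+1}" by (auto simp: f_def)
      show "{1..t} \<union> {t+2..n+1} \<subseteq> f ` {1..n}"
      proof
        fix x assume x: "x \<in> {1..t} \<union> {t+2..n+1}"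
        show "x \<in> f ` {1..n}"
        proof (cases "x \<le> t")
          case True then show ?thesis using x t1 by (intro image_eqI[of _ _ x]) (auto simp: f_def)
        next
          case False then show ?thesis using x t1 by (intro image_eqI[of _ _ "x - 1"]) (auto simp: f_def)
        qed
      qed
    qed
    then show "set ?Q = {1..length ?Q}" using setQ t1 by (auto simp: n_def)
  qed
  let ?g = "\<lambda>x::nat. if x < t + 1 then x else Suc x"
  have bm: "before (map f p) (f x) (f y) \<longleftrightarrow> before p x y" for x y using before_map[OF injf] .
  have "card (recs ?Q) = card (recs p)"
  proof (rule card_image_char[of ?g])
    fix j
    show "?g j \<in> recs ?Q \<longleftrightarrow> j \<in> recs p"
    proof (cases "j < t")
      case True
      then have "f j = j" "f (Suc j) = Suc j" by (auto simp: f_def)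
      then have "before (map f p) (Suc j) j \<longleftrightarrow> before p (Suc j) j" using bm by metis
      then show ?thesis using True t1 by (auto simp: recs_def n_def)
    next
      case False
      show ?thesis
      proof (cases "j = t")
        case True
        have "f t = t" by (simp add: f_def)
        then have "t \<in> set (map f p)" using t1 by (metis image_eqI set_map)
        then have "t \<in> recs ?Q" using t1 by (auto simp: recs_def n_def)
        then show ?thesis using True assms(3) by simp
      next
        case False
        then have jl: "j > t" using \<open>\<not> j < t\<close> by simp
        then have "f j = Suc j" "f (Suc j) = Suc (Suc j)" by (auto simp: f_def)
        then have "before (map f p) (Suc (Suc j)) (Suc j) \<longleftrightarrow> before p (Suc j) j" using bm by metis
        then show ?thesis using jl t1 by (auto simp: recs_def n_def)
      qed
    qed
  next
    fix i assume i: "i \<in> recs ?Q"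
    have "i \<noteq> t + 1"
    proof
      assume "i = t + 1"
      then have "before ?Q (Suc (t+1)) (t+1)" using i by (simp add: recs_def)
      then show False using mnot by (auto dest: before_set)
    qed
    then show "i \<in> range ?g"
    proof (cases "i < t + 1")
      case True then show ?thesis by (intro range_eqI[where x=i]) simp
    next
      case False then show ?thesis using \<open>i \<noteq> t + 1\<close> by (intro range_eqI[where x="i - 1"]) auto
    qed
  qed (rule inj_g)
  then show ?thesis using recoils_recs[OF dQ] recoils_recs[OF assms(1,2)] Q by (simp add: num_recoils_def)
qed

lemma mono_chain:
  assumes "\<And>k. v \<le> k \<Longrightarrow> k < u \<Longrightarrow> (h::nat\<Rightarrow>nat) k < h (Suc k)" "v < u"
  shows "h v < h u"
  using assms
proof (induction u)
  case 0 then show ?case by simp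
next
  case (Suc u)
  show ?case
  proof (cases "v < u")
    case True then have "h v < h u" using Suc by auto
    then show ?thesis using Suc.prems(1)[of u] True by simp
  next
    case False then have "v = u" using Suc by simp
    then show ?thesis using Suc.prems(1)[of u] by simp
  qed
qed

lemma no_recs_id:
  assumes "distinct p" "set p = {1..length p}" "recs p = {}"
  shows "p = idperm (length p)"
proof -
  define n where "n = length p"
  have pos: "perm_inv p k < perm_inv p (Suc k)" if "1 \<le> k" "k < n" for k
  proof -
    have ks: "k \<in> set p" "Suc k \<in> set p" using that assms(2) by (auto simp: n_def)
    have "\<not> before p (Suc k) k" using assms(3) that by (auto simp: recs_def n_def)
    then have "\<not> perm_inv p (Suc k) < perm_inv p k" using perm_inv_less[OF assms(1) ks(1) ks(2)] by simp
    moreover have "perm_inv p (Suc k) \<noteq> perm_inv p k"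
    proof
      assume e: "perm_inv p (Suc k) = perm_inv p k"
      obtain a where a: "a < n" "p!a = k" using ks(1) by (auto simp: in_set_conv_nth n_def)
      obtain b where b: "b < n" "p!b = Suc k" using ks(2) by (auto simp: in_set_conv_nth n_def)
      show False using e perm_inv_nth[OF assms(1), of a] perm_inv_nth[OF assms(1), of b] a b
        by (auto simp: n_def)
    qed
    ultimately show ?thesis by simp
  qed
  have "sorted p"
  proof (rule sorted_iff_nth_mono_less[THEN iffD2], intro allI impI)
    fix i j assume ij: "i < j" "j < length p"
    show "p!i \<le> p!j"
    proof (rule ccontr)
      assume "\<not> p!i \<le> p!j"
      then have lt: "p!j < p!i" by simp
      have r: "p!i \<in> {1..n}" "p!j \<in> {1..n}" using ij assms(2) nth_mem[of i p] nth_mem[of j p]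
        by (auto simp: n_def)
      have "perm_inv p (p!j) < perm_inv p (p!i)"
        by (rule mono_chain[OF _ lt]) (use pos r in auto)
      then show False using perm_inv_nth[OF assms(1), of i] perm_inv_nth[OF assms(1), of j] ij by simp
    qed
  qed
  then have "p = sorted_list_of_set {1..n}"
    using assms(1,2) by (metis n_def sorted_list_of_set.idem_if_sorted_distinct)
  also have "\<dots> = [1..<n+1]" by (metis Suc_eq_plus1 atLeastLessThanSuc_atLeastAtMost sorted_list_of_set_range)
  finally show ?thesis by (simp add: idperm_def n_def)
qed


lemma sand_decomp:
  assumes "distinct p" "set p = {1..length p}" "sandwiched a b p" "p \<noteq> idperm (length p)"
  obtains m where "p = [1..<a+1] @ m @ [a+1..<a+b+1]" "set m = {a+b+1..length p}" "distinct m"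
    "a + b < length p" "1 \<le> b"
proof -
  define n where "n = length p"
  have s: "1 \<le> b" "a \<le> n" "b \<le> n" "take a p = [1..<a+1]" "drop (n - b) p = [a+1..<a+b+1]"
    using assms(3) by (auto simp: sandwiched_def n_def)
  have abn: "a + b \<le> n"
  proof (rule ccontr)
    assume "\<not> a + b \<le> n"
    define k where "k = n - b"
    have k: "k < a" "k < n" using \<open>\<not> a + b \<le> n\<close> s by (auto simp: k_def)
    have "p!k = take a p ! k" using k by simp
    also have "\<dots> = k + 1" using s(4) k by (simp del: upt_Suc add: nth_upt)
    finally have 1: "p!k = k+1" .
    have "p!k = drop (n-b) p ! 0" using k by (simp add: k_def n_def)
    also have "\<dots> = a + 1" using s(5) s(1) by (simp del: upt_Suc)
    finally show False using 1 k by simp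
  qed
  define m where "m = take (n - a - b) (drop a p)"
  have "drop a p = m @ drop (n - b) p"
  proof -
    have "drop a p = take (n-a-b) (drop a p) @ drop (n-a-b) (drop a p)" by (rule append_take_drop_id[symmetric])
    also have "drop (n-a-b) (drop a p) = drop (n-b) p" using abn by (simp add: add.commute)
    finally show ?thesis by (simp add: m_def)
  qed
  then have pd: "p = [1..<a+1] @ m @ [a+1..<a+b+1]"
    by (metis append_take_drop_id s(4) s(5))
  have lm: "length m = n - a - b" using abn by (simp add: m_def n_def)
  have abl: "a + b < n"
  proof (rule ccontr)
    assume "\<not> a + b < n"
    then have "m = []" using lm by simp
    then have "p = [1..<a+1] @ [a+1..<a+b+1]" using pd by simp
    also have "\<dots> = [1..<n+1]" using abn \<open>\<not> a + b < n\<close> upt_add_eq_append[of 1 "a+1" b]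
      by (simp add: ac_simps del: upt_Suc)
    finally show False using assms(4) by (simp add: idperm_def n_def)
  qed
  have dm: "distinct m" using assms(1) pd by (metis distinct_append)
  have "set p = {1..a} \<union> set m \<union> {a+1..a+b}" by (subst pd) (auto simp del: upt_Suc)
  moreover have "set m \<inter> {1..a+b} = {}"
  proof -
    have d: "distinct ([1..<a+1] @ m @ [a+1..<a+b+1])" using assms(1) pd by simp
    then have d1: "set m \<inter> {1..<a+1} = {}" and d2: "set m \<inter> {a+1..<a+b+1} = {}"
      by (simp_all only: distinct_append set_append set_upt) blast+
    show ?thesis
    proof (rule ccontr)
      assume "set m \<inter> {1..a+b} \<noteq> {}"
      then obtain x where "x \<in> set m" "1 \<le> x" "x \<le> a+b" by auto
      then show False using d1 d2 by (cases "x \<le> a") auto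
    qed
  qed
  moreover have "{1..a} \<union> {a+1..a+b} = {1..a+b}" by auto
  ultimately have "set m = {1..n} - {1..a+b}" using assms(2) by (auto simp: n_def)
  also have "\<dots> = {a+b+1..n}" by auto
  finally show ?thesis using that pd dm abl s(1) by (simp add: n_def)
qed


lemma sand_recs_p:
  assumes pd: "p = [1..<a+1] @ m @ [a+1..<a+b+1]" and sm: "set m = {a+b+1..length p}"
    and abl: "a + b < length p" and b1: "1 \<le> b"
  shows "i \<in> recs p \<longleftrightarrow> i = a + b \<or> (a + b < i \<and> i < length p \<and> before m (Suc i) i)"
proof -
  have "before p (Suc i) i \<longleftrightarrow> before ([1..<a+1] @ m @ [a+1..<a+b+1]) (Suc i) i"
    using pd by simp
  also have "\<dots> \<longleftrightarrow> (i = a + b \<or> (a + b < i \<and> before m (Suc i) i))"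
    using sm abl b1 by (auto simp del: upt_Suc dest: before_set)
  finally show ?thesis using abl b1 by (auto simp: recs_def)
qed


lemma gamma_shape:
  assumes "length X = k" "length M = l"
  shows "gamma (k+l+1) (k+1) (X @ M @ y # B) = X @ [y] @ M @ B"
  using assms by (simp add: gamma_def nth_append)

lemma sand_recs_r:
  assumes r: "r = (a+b+1) # [1..<a+1] @ [a+1] @ map Suc m @ [a+2..<a+b+1]"
    and sm: "set m = {a+b+1..n}" and abl: "a + b < n" and b1: "1 \<le> b" and lr: "length r = n + 1"
  shows "i \<in> recs r \<longleftrightarrow> i = a + b \<or> (a + b + 1 < i \<and> i < n + 1 \<and> before (map Suc m) (Suc i) i)"
proof -
  have sM: "set (map Suc m) = {a+b+2..n+1}" using sm by auto
  have "before r (Suc i) i \<longleftrightarrow> before ((a+b+1) # [1..<a+1] @ [a+1] @ map Suc m @ [a+2..<a+b+1]) (Suc i) i"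
    using r by simp
  also have "\<dots> \<longleftrightarrow> (i = a + b \<or> (a + b + 1 < i \<and> before (map Suc m) (Suc i) i))"
    unfolding before.simps before_append set_append sM using abl b1
    by (auto simp del: upt_Suc simp: sm dest: before_set)
  finally show ?thesis using abl b1 lr by (auto simp: recs_def sm dest: before_set)
qed


lemma part_q2:
  assumes dp: "distinct p" "set p = {1..length p}" and sw: "sandwiched a b p"
    and ni: "p \<noteq> idperm (length p)"
  shows "num_recoils (gamma (length p - b + 2) (a + 2) (rho (Min (recoils p) + 1) 1 p)) = num_recoils p"
proof -
  define n where "n = length p"
  obtain m where pd: "p = [1..<a+1] @ m @ [a+1..<a+b+1]" and sm: "set m = {a+b+1..n}"
    and dm: "distinct m" and abl: "a + b < n" and b1: "1 \<le> b"
    using sand_decomp[OF dp sw ni] n_def by metis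
  have lm: "length m = n - a - b" using distinct_card[OF dm] sm by simp
  have R: "recoils p = recs p" using recoils_recs[OF dp] .
  have rp: "i \<in> recs p \<longleftrightarrow> i = a + b \<or> (a + b < i \<and> i < n \<and> before m (Suc i) i)" for i
    using sand_recs_p[OF pd] sm abl b1 by (simp add: n_def)
  have "Min (recs p) = a + b"
    by (rule Min_eqI) (auto simp: recs_finite rp)
  then have t: "Min (recoils p) = a + b" using R by simp
  define f where "f = (\<lambda>x::nat. if x \<ge> a + b + 1 then x + 1 else x)"
  have "map f [1..<a+1] = [1..<a+1]" by (rule map_idI) (auto simp: f_def)
  moreover have "map f m = map Suc m" by (rule map_cong) (auto simp: f_def sm)
  moreover have "map f [a+1..<a+b+1] = [a+1..<a+b+1]" by (rule map_idI) (auto simp: f_def)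
  ultimately have "map f p = [1..<a+1] @ map Suc m @ [a+1..<a+b+1]" by (subst pd) simp
  then have rho: "rho (Min (recoils p) + 1) 1 p = ((a+b+1) # [1..<a+1]) @ map Suc m @ (a+1) # [a+2..<a+b+1]"
    using t b1 by (simp add: rho_def f_def upt_conv_Cons del: upt_Suc)
  define r where "r = (a+b+1) # [1..<a+1] @ [a+1] @ map Suc m @ [a+2..<a+b+1]"
  have "gamma ((a+1) + (n-a-b) + 1) ((a+1) + 1) (((a+b+1) # [1..<a+1]) @ map Suc m @ (a+1) # [a+2..<a+b+1])
        = ((a+b+1) # [1..<a+1]) @ [a+1] @ map Suc m @ [a+2..<a+b+1]"
    by (rule gamma_shape) (auto simp: lm)
  moreover have "(a+1) + (n-a-b) + 1 = n - b + 2" "(a+1) + 1 = a + 2" using abl by auto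
  ultimately have G: "gamma (length p - b + 2) (a + 2) (rho (Min (recoils p) + 1) 1 p) = r"
    using rho by (simp add: r_def n_def del: upt_Suc)
  have "length r = 1 + a + 1 + length m + (b - 1)" by (simp add: r_def del: upt_Suc)
  then have lr: "length r = n + 1" using lm abl b1 by linarith
  have dr: "distinct r" "set r = {1..length r}"
  proof -
    show "distinct r" using dm sm b1 abl by (auto simp: r_def distinct_map simp del: upt_Suc)
    have "set r = {a+b+1} \<union> {1..a} \<union> {a+1} \<union> {a+b+2..n+1} \<union> {a+2..a+b}"
      using sm by (auto simp: r_def simp del: upt_Suc)
    also have "\<dots> = {1..n+1}" using b1 abl by auto
    finally show "set r = {1..length r}" using lr by simp
  qed
  have rr: "i \<in> recs r \<longleftrightarrow> i = a + b \<or> (a + b + 1 < i \<and> i < n + 1 \<and> before (map Suc m) (Suc i) i)" for i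
    using sand_recs_r[OF r_def sm abl b1 lr] .
  have bm: "before (map Suc m) (Suc x) (Suc y) \<longleftrightarrow> before m x y" for x y
    using before_map[of Suc] by simp
  let ?g = "\<lambda>x::nat. if x < a + b + 1 then x else Suc x"
  have "card (recs r) = card (recs p)"
  proof (rule card_image_char[of ?g])
    fix j show "?g j \<in> recs r \<longleftrightarrow> j \<in> recs p"
      using rr rp bm by auto
  next
    fix i assume i: "i \<in> recs r"
    then have "i \<noteq> a + b + 1" using rr by auto
    then show "i \<in> range ?g"
    proof (cases "i < a + b + 1")
      case True then show ?thesis by (intro range_eqI[where x=i]) simp
    next
      case False then show ?thesis using \<open>i \<noteq> a + b + 1\<close> by (intro range_eqI[where x="i - 1"]) auto
    qed
  qed (rule inj_g)
  then show ?thesis using recoils_recs[OF dr] R G by (simp add: num_recoils_def)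
qed


lemma part_q:
  assumes dp: "distinct p" "set p = {1..length p}" and ni: "p \<noteq> idperm (length p)"
  shows "num_recoils (psi_q p) = num_recoils p"
proof (cases "\<exists>a b. sandwiched a b p")
  case True
  obtain a b where ab: "(SOME ab. sandwiched (fst ab) (snd ab) p) = (a, b)" by (metis prod.exhaust)
  have "\<exists>ab. sandwiched (fst ab) (snd ab) p" using True by auto
  then have "sandwiched (fst (SOME ab. sandwiched (fst ab) (snd ab) p)) (snd (SOME ab. sandwiched (fst ab) (snd ab) p)) p"
    by (rule someI_ex)
  then have sw: "sandwiched a b p" using ab by simp
  have "psi_q p = gamma (length p - b + 2) (a + 2) (rho (Min (recoils p) + 1) 1 p)"
    using True ab by (simp add: psi_q_def Let_def)
  then show ?thesis using part_q2[OF dp sw ni] by simp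
next
  case False
  have "recs p \<noteq> {}" using no_recs_id[OF dp] ni by blast
  then have "Min (recs p) \<in> recs p" using recs_finite by simp
  then have "Min (recoils p) \<in> recs p" using recoils_recs[OF dp] by simp
  moreover have "psi_q p = rho (Min (recoils p) + 1) 1 p"
    using False by (simp add: psi_q_def Let_def)
  ultimately show ?thesis using part_q1[OF dp] by simp
qed

theorem proposition5p18:
  shows "(\<forall>p. evil_avoiding p \<and> p \<noteq> idperm (length p) \<longrightarrow>
             num_recoils (psi_p p) = num_recoils p)
       \<and> (\<forall>p. evil_avoiding p \<and> p \<noteq> idperm (length p) \<longrightarrow>
             num_recoils (psi_q p) = num_recoils p)
       \<and> (\<forall>p. evil_avoiding p \<and>
             (p = idperm (length p) \<or> (\<exists>t\<ge>1. drop (length p - t) p = [1..<t+1])) \<longrightarrow>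
             num_recoils (psi_s p) = num_recoils p)
       \<and> (\<forall>p. evil_avoiding p \<and> length p \<ge> 1 \<longrightarrow>
             num_recoils (psi_r p) = num_recoils p + 1)"
proof (intro conjI allI impI; elim conjE)
  fix p assume "evil_avoiding p" "p \<noteq> idperm (length p)"
  then show "num_recoils (psi_p p) = num_recoils p" using part_p evil_perm by blast
next
  fix p assume "evil_avoiding p" "p \<noteq> idperm (length p)"
  then show "num_recoils (psi_q p) = num_recoils p" using part_q evil_perm by blast
next
  fix p assume e: "evil_avoiding p"
  show "num_recoils (psi_s p) = num_recoils p"
  proof (cases "p = []")
    case True
    have "recoils [] = {}" "recoils [1] = {}" by (auto simp: recoils_def)
    then show ?thesis using True by (simp add: psi_s_def num_recoils_def)
  next
    case False then show ?thesis using part_s evil_perm[OF e] by blast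
  qed
next
  fix p assume "evil_avoiding p" "length p \<ge> 1"
  then show "num_recoils (psi_r p) = num_recoils p + 1" using part_r evil_perm by blast
qed

end
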